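(* Assume $Q\ll P$ with $f=\frac{dQ}{dP}$. Let $R$ be a measurable function on $(\Omega,\mathcal F)$ with $\sigma(R)\subset\sigma(X)$ such that $P[Y\in G\mid\sigma(X)]=P[Y\in G\mid\sigma(R)]$ and $Q[Y\in G\mid\sigma(X)]=Q[Y\in G\mid\sigma(R)]$ for all $G\in\mathcal G$, and a regular conditional distribution $P_{Y|R}$ exists. Suppose that $P|\sigma(R,Y)$ and $Q|\sigma(R,Y)$ are related through label shift (generalized label shift), i.e. $P[R\in M\mid Y=\cdot]=Q[R\in M\mid Y=\cdot]$ (a.s. under $P_Y$ resp. $Q_Y$) for all measurable $M$. Let $g=\frac{dQ_Y}{dP_Y}$. Then $P$ and $Q$ are related through FJS with $$\frac{dQ}{dP}=\frac{E_P[f(X,Y)\mid\sigma(X)]}{E_P[g(Y)\mid\sigma(X)]}\,g(Y)$$ (with the convention $0/0=0$).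
   Context: Setting: $(\Omega_X,\mathcal H)$ and $(\Omega_Y,\mathcal G)$ are measurable spaces, $\Omega=\Omega_X\times\Omega_Y$, $\mathcal F=\mathcal H\otimes\mathcal G$, and $X,Y$ are the coordinate projections. $P$ and $Q$ are probability measures on $(\Omega,\mathcal F)$ with marginals $P_Y,Q_Y$. For a sub-$\sigma$-algebra $\mathcal C$, $P|\mathcal C$ is the restriction of $P$ to $\mathcal C$. $P$ and $Q$ are related through factorizable joint shift (FJS) if $\frac{dQ}{dP}=\hbar(X)\overline g(Y)$ for measurable non-negative $\hbar$ on $\Omega_X$ and $\overline g$ on $\Omega_Y$. A regular conditional distribution $P_{Y|R}$ is a map $(r,G)\mapsto P_{Y|R=r}[G]$ measurable in $r$, a probability measure in $G$, with $P[Y\in G\mid R=r]=P_{Y|R=r}[G]$ for a.e. $r$ and every $G$. *)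

theory Defs
  imports "HOL-Probability.Probability"
begin

text \<open>Factorizable joint shift on \<Omega> = \<Omega>X \<times> \<Omega>Y with X = fst, Y = snd:
  dQ/dP = hbar(X) * gbar(Y) for measurable non-negative hbar, gbar.\<close>
definition FJS :: "'x measure \<Rightarrow> 'y measure \<Rightarrow> ('x \<times> 'y) measure \<Rightarrow> ('x \<times> 'y) measure \<Rightarrow> bool" where
  "FJS MX MY P Q \<longleftrightarrow>
     (\<exists>hb gb. hb \<in> borel_measurable MX \<and> gb \<in> borel_measurable MY \<and>
        (\<forall>x\<in>space MX. hb x \<ge> 0) \<and> (\<forall>y\<in>space MY. gb y \<ge> 0) \<and>
        density P (\<lambda>\<omega>. ennreal (hb (fst \<omega>) * gb (snd \<omega>))) = Q)"

end

theory Submission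
  imports Defs
begin


lemma subalg_vimage:
  assumes "h \<in> measurable M N"
  shows "subalgebra M (vimage_algebra (space M) h N)"
  unfolding subalgebra_def
proof
  show "space (vimage_algebra (space M) h N) = space M" by simp
  have hs: "h \<in> space M \<rightarrow> space N" using measurable_space[OF assms] by auto
  show "sets (vimage_algebra (space M) h N) \<subseteq> sets M"
  proof
    fix A assume "A \<in> sets (vimage_algebra (space M) h N)"
    then obtain B where "B \<in> sets N" "A = h -` B \<inter> space M"
      unfolding sets_vimage_algebra2[OF hs] by blast
    then show "A \<in> sets M" using measurable_sets[OF assms] by simp
  qed
qed

lemma sfs_prob:
  assumes "prob_space M" "subalgebra M F"
  shows "sigma_finite_subalgebra M F"
  apply (rule finite_measure_subalgebra_is_sigma_finite)
  unfolding finite_measure_subalgebra_def finite_measure_subalgebra_axioms_def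
  using assms prob_space.finite_measure by blast

lemma (in sigma_finite_subalgebra) real_nn_cond_exp:
  assumes [measurable]: "f \<in> borel_measurable M" and pos: "\<And>x. f x \<ge> 0"
    and fin: "(\<integral>\<^sup>+x. ennreal (f x) \<partial>M) < \<infinity>"
  shows "AE x in M. ennreal (real_cond_exp M F f x) = nn_cond_exp M F (\<lambda>x. ennreal (f x)) x"
proof -
  have "(\<lambda>x. ennreal (- f x)) = (\<lambda>x. 0)" using pos by (simp add: ennreal_neg)
  moreover have "AE x in M. 0 = nn_cond_exp M F (\<lambda>x. 0) x"
    by (rule nn_cond_exp_F_meas, auto)
  ultimately have z: "AE x in M. nn_cond_exp M F (\<lambda>x. ennreal(-f x)) x = 0"
    by simp
  have "(\<integral>\<^sup>+x. 1 * nn_cond_exp M F (\<lambda>x. ennreal(f x)) x \<partial>M) = (\<integral>\<^sup>+x. 1 * ennreal (f x) \<partial>M)"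
    by (rule nn_cond_exp_intg) auto
  then have "(\<integral>\<^sup>+x. nn_cond_exp M F (\<lambda>x. ennreal(f x)) x \<partial>M) \<noteq> \<infinity>" using fin by simp
  then have "AE x in M. nn_cond_exp M F (\<lambda>x. ennreal(f x)) x \<noteq> \<infinity>"
    by (intro nn_integral_PInf_AE) auto
  with z show ?thesis
  proof eventually_elim
    case (elim x)
    then have "real_cond_exp M F f x = enn2real (nn_cond_exp M F (\<lambda>x. ennreal (f x)) x)"
      unfolding real_cond_exp_def by simp
    then show ?case using elim(2) by (simp add: ennreal_enn2real_if)
  qed
qed

lemma cond_indep_nn:
  assumes sfs: "sigma_finite_subalgebra M F" and ne: "space M \<noteq> {}"
    and Ym[measurable]: "Y \<in> measurable M N"
    and km[measurable]: "\<kappa> \<in> measurable M (subprob_algebra N)"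
    and ind: "\<And>G. G \<in> sets N \<Longrightarrow> AE \<omega> in M.
        nn_cond_exp M F (indicator (Y -` G \<inter> space M)) \<omega> = emeasure (\<kappa> \<omega>) G"
    and W[measurable]: "W \<in> borel_measurable F" and phi[measurable]: "\<phi> \<in> borel_measurable N"
  shows "(\<integral>\<^sup>+\<omega>. W \<omega> * \<phi> (Y \<omega>) \<partial>M) = (\<integral>\<^sup>+\<omega>. W \<omega> * (\<integral>\<^sup>+y. \<phi> y \<partial>\<kappa> \<omega>) \<partial>M)"
proof -
  interpret sigma_finite_subalgebra M F by (rule sfs)
  have Wm[measurable]: "W \<in> borel_measurable M" by (rule measurable_from_subalg[OF subalg W])
  define D where "D = density M W"
  have sD[measurable_cong]: "sets D = sets M" unfolding D_def by simp
  have spD: "space D = space M" unfolding D_def by simp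
  have kD: "\<kappa> \<in> measurable D (subprob_algebra N)" using km measurable_cong_sets[OF sD refl] by simp
  have YD: "Y \<in> measurable D N" using Ym measurable_cong_sets[OF sD refl] by simp
  have sk: "\<And>x. x \<in> space D \<Longrightarrow> sets (\<kappa> x) = sets N"
    using measurable_space[OF kD] by (simp add: space_subprob_algebra)
  have eqm: "distr D N Y = D \<bind> \<kappa>"
  proof (rule measure_eqI)
    show "sets (distr D N Y) = sets (D \<bind> \<kappa>)"
    proof -
      have "sets (D \<bind> \<kappa>) = sets N" by (rule sets_bind[OF sk]) (auto simp: spD ne)
      then show ?thesis by simp
    qed
  next
    fix G assume "G \<in> sets (distr D N Y)"
    then have G[measurable]: "G \<in> sets N" by simp
    have "emeasure (distr D N Y) G = emeasure D (Y -` G \<inter> space M)"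
      using emeasure_distr[OF YD G] spD by simp
    also have "\<dots> = (\<integral>\<^sup>+\<omega>. W \<omega> * indicator (Y -` G \<inter> space M) \<omega> \<partial>M)"
      unfolding D_def by (subst emeasure_density) (auto intro!: nn_integral_cong simp: mult.commute)
    also have "\<dots> = (\<integral>\<^sup>+\<omega>. W \<omega> * nn_cond_exp M F (indicator (Y -` G \<inter> space M)) \<omega> \<partial>M)"
      by (rule nn_cond_exp_intg[symmetric]) auto
    also have "\<dots> = (\<integral>\<^sup>+\<omega>. W \<omega> * emeasure (\<kappa> \<omega>) G \<partial>M)"
      using ind[OF G] by (intro nn_integral_cong_AE) auto
    also have "\<dots> = (\<integral>\<^sup>+\<omega>. emeasure (\<kappa> \<omega>) G \<partial>D)"
      unfolding D_def by (subst nn_integral_density)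
        (auto intro: measurable_emeasure_subprob_algebra)
    also have "\<dots> = emeasure (D \<bind> \<kappa>) G"
      using emeasure_bind[OF _ kD G] ne spD by simp
    finally show "emeasure (distr D N Y) G = emeasure (D \<bind> \<kappa>) G" .
  qed
  have "(\<integral>\<^sup>+\<omega>. W \<omega> * \<phi> (Y \<omega>) \<partial>M) = (\<integral>\<^sup>+\<omega>. \<phi> (Y \<omega>) \<partial>D)"
    unfolding D_def by (subst nn_integral_density) auto
  also have "\<dots> = (\<integral>\<^sup>+y. \<phi> y \<partial>distr D N Y)"
    by (rule nn_integral_distr[symmetric, OF YD]) simp
  also have "\<dots> = (\<integral>\<^sup>+\<omega>. (\<integral>\<^sup>+y. \<phi> y \<partial>\<kappa> \<omega>) \<partial>D)"
    unfolding eqm by (rule nn_integral_bind[OF phi kD])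
  also have "\<dots> = (\<integral>\<^sup>+\<omega>. W \<omega> * (\<integral>\<^sup>+y. \<phi> y \<partial>\<kappa> \<omega>) \<partial>M)"
    unfolding D_def by (subst nn_integral_density)
       (auto intro!: nn_integral_measurable_subprob_algebra2[where N=N])
  finally show ?thesis .
qed

lemma vimage_fst_const:
  fixes h :: "'a \<times> 'b \<Rightarrow> real"
  assumes h: "h \<in> borel_measurable (vimage_algebra S fst MX)"
    and S: "fst \<in> S \<rightarrow> space MX"
    and uv: "u \<in> S" "v \<in> S" "fst u = fst v"
  shows "h u = h v"
proof -
  have "{h u} \<in> sets borel" by simp
  then have "h -` {h u} \<inter> space (vimage_algebra S fst MX) \<in> sets (vimage_algebra S fst MX)"
    by (rule measurable_sets[OF h])
  then have "h -` {h u} \<inter> S \<in> sets (vimage_algebra S fst MX)"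
    by (simp only: space_vimage_algebra)
  then have "h -` {h u} \<inter> S \<in> {fst -` A \<inter> S | A. A \<in> sets MX}"
    unfolding sets_vimage_algebra2[OF S] .
  then obtain A where A: "h -` {h u} \<inter> S = fst -` A \<inter> S" by blast
  have "u \<in> h -` {h u} \<inter> S" using uv(1) by simp
  then have "u \<in> fst -` A \<inter> S" using A by simp
  then have "v \<in> fst -` A \<inter> S" using uv by simp
  then have "v \<in> h -` {h u} \<inter> S" using A by simp
  then show ?thesis by simp
qed

lemma ennreal_mult_nonneg_right: assumes "(y::real) \<ge> 0" shows "ennreal (x * y) = ennreal x * ennreal y"
proof (cases "x \<ge> 0")
  case True
  then show ?thesis using assms by (simp add: ennreal_mult)
next
  case False
  then have "x * y \<le> 0" using assms by (simp add: mult_nonpos_nonneg)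
  then show ?thesis using False by (simp add: ennreal_neg)
qed

lemma real_nn_cond_exp_ind:
  assumes sf: "sigma_finite_subalgebra M F" and fm: "finite_measure M" and S: "S \<in> sets M"
  shows "AE x in M. ennreal (real_cond_exp M F (indicator S) x) = nn_cond_exp M F (indicator S) x"
proof -
  interpret sigma_finite_subalgebra M F by (rule sf)
  interpret finite_measure M by (rule fm)
  have fin: "(\<integral>\<^sup>+x. ennreal (indicator S x) \<partial>M) < \<infinity>"
  proof -
    have "(\<integral>\<^sup>+x. ennreal (indicator S x) \<partial>M) = emeasure M S"
      using S by (simp add: ennreal_indicator)
    then show ?thesis using emeasure_finite[of S] by (simp add: less_top[symmetric])
  qed
  have "AE x in M. ennreal (real_cond_exp M F (indicator S) x) = nn_cond_exp M F (\<lambda>x. ennreal (indicator S x)) x"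
    by (rule real_nn_cond_exp) (use S fin in auto)
  moreover have "(\<lambda>x. ennreal (indicator S x)) = indicator S"
    by (auto simp: fun_eq_iff indicator_def)
  ultimately show ?thesis by simp
qed

lemma key_alg:
  fixes a b :: real and q :: ennreal
  assumes "b \<ge> 0" "b = 0 \<Longrightarrow> ennreal a = 0"
  shows "ennreal (a / b) * (q * ennreal b) = q * ennreal a"
proof (cases "b = 0")
  case True
  then show ?thesis using assms by simp
next
  case False
  have "ennreal (a / b * b) = ennreal (a / b) * ennreal b"
    by (rule ennreal_mult_nonneg_right) (use assms in simp)
  moreover have "a / b * b = a" using False by simp
  ultimately have "ennreal (a / b) * ennreal b = ennreal a" by simp
  then show ?thesis by (metis mult.left_commute)
qed

lemma ennreal_max0_mult:
  fixes t y :: real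
  assumes "y \<ge> 0"
  shows "ennreal (max 0 t * y) = ennreal (t * y)"
proof -
  have "ennreal (max 0 t) = ennreal t" by (cases "t \<ge> 0") (auto simp: ennreal_neg)
  then show ?thesis using assms by (simp add: ennreal_mult_nonneg_right)
qed


theorem corollary4:
  fixes MX :: "'x measure" and MY :: "'y measure" and MR :: "'r measure"
    and P Q :: "('x \<times> 'y) measure"
    and R :: "'x \<times> 'y \<Rightarrow> 'r" and K :: "'r \<Rightarrow> 'y measure"
  assumes P: "prob_space P" and Q: "prob_space Q"
    and sP: "sets P = sets (MX \<Otimes>\<^sub>M MY)" and sQ: "sets Q = sets (MX \<Otimes>\<^sub>M MY)"
    and ac: "absolutely_continuous P Q"
    and R_meas: "R \<in> measurable P MR"
    and R_X: "sets (vimage_algebra (space P) R MR) \<subseteq> sets (vimage_algebra (space P) fst MX)"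
    and condP: "\<And>G. G \<in> sets MY \<Longrightarrow> AE \<omega> in P.
        real_cond_exp P (vimage_algebra (space P) fst MX) (indicator (snd -` G \<inter> space P)) \<omega>
      = real_cond_exp P (vimage_algebra (space P) R MR) (indicator (snd -` G \<inter> space P)) \<omega>"
    and condQ: "\<And>G. G \<in> sets MY \<Longrightarrow> AE \<omega> in Q.
        real_cond_exp Q (vimage_algebra (space Q) fst MX) (indicator (snd -` G \<inter> space Q)) \<omega>
      = real_cond_exp Q (vimage_algebra (space Q) R MR) (indicator (snd -` G \<inter> space Q)) \<omega>"
    and K_kernel: "K \<in> MR \<rightarrow>\<^sub>M prob_algebra MY"
    and K_rcd: "\<And>G. G \<in> sets MY \<Longrightarrow> AE \<omega> in P.
        real_cond_exp P (vimage_algebra (space P) R MR) (indicator (snd -` G \<inter> space P)) \<omega>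
      = measure (K (R \<omega>)) G"
    and label_shift: "\<And>M. M \<in> sets MR \<Longrightarrow> \<exists>h \<in> borel_measurable MY.
        (AE \<omega> in P. real_cond_exp P (vimage_algebra (space P) snd MY)
            (indicator (R -` M \<inter> space P)) \<omega> = h (snd \<omega>)) \<and>
        (AE \<omega> in Q. real_cond_exp Q (vimage_algebra (space Q) snd MY)
            (indicator (R -` M \<inter> space Q)) \<omega> = h (snd \<omega>))"
  defines "f \<equiv> (\<lambda>\<omega>. enn2real (RN_deriv P Q \<omega>))"
    and "g \<equiv> (\<lambda>y. enn2real (RN_deriv (distr P MY snd) (distr Q MY snd) y))"
  shows "FJS MX MY P Q \<and>
    density P (\<lambda>\<omega>. ennreal
       (real_cond_exp P (vimage_algebra (space P) fst MX) f \<omega>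
        / real_cond_exp P (vimage_algebra (space P) fst MX) (\<lambda>\<omega>'. g (snd \<omega>')) \<omega>
        * g (snd \<omega>))) = Q"
proof -
  interpret P: prob_space P by (rule P)
  interpret Q: prob_space Q by (rule Q)
  note sP[measurable_cong] sQ[measurable_cong]
  have spQ: "space Q = space P" using sets_eq_imp_space_eq[of Q P] sP sQ by simp
  have spP: "space P = space MX \<times> space MY"
    using sets_eq_imp_space_eq[OF sP] by (simp add: space_pair_measure)
  have neP: "space P \<noteq> {}" by (rule P.not_empty)
  define FX where "FX = vimage_algebra (space P) fst MX"
  define FR where "FR = vimage_algebra (space P) R MR"
  define FY where "FY = vimage_algebra (space P) snd MY"
  have fstP[measurable]: "fst \<in> measurable P MX" by measurable
  have sndP[measurable]: "snd \<in> measurable P MY" by measurable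
  have fstQ[measurable]: "fst \<in> measurable Q MX" by measurable
  have sndQ[measurable]: "snd \<in> measurable Q MY" by measurable
  have RP[measurable]: "R \<in> measurable P MR" by (rule R_meas)
  have RQ[measurable]: "R \<in> measurable Q MR" using R_meas measurable_cong_sets[of Q P] sP sQ by simp
  have subPX: "subalgebra P FX" unfolding FX_def by (rule subalg_vimage[OF fstP])
  have subPR: "subalgebra P FR" unfolding FR_def by (rule subalg_vimage[OF RP])
  have subPY: "subalgebra P FY" unfolding FY_def by (rule subalg_vimage[OF sndP])
  have subQX: "subalgebra Q FX" unfolding FX_def using subalg_vimage[OF fstQ] spQ by simp
  have subQR: "subalgebra Q FR" unfolding FR_def using subalg_vimage[OF RQ] spQ by simp
  have subQY: "subalgebra Q FY" unfolding FY_def using subalg_vimage[OF sndQ] spQ by simp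
  have subXR: "subalgebra FX FR" unfolding subalgebra_def FX_def FR_def using R_X by simp
  have sfPX: "sigma_finite_subalgebra P FX" by (rule sfs_prob[OF P subPX])
  have sfPR: "sigma_finite_subalgebra P FR" by (rule sfs_prob[OF P subPR])
  have sfPY: "sigma_finite_subalgebra P FY" by (rule sfs_prob[OF P subPY])
  have sfQX: "sigma_finite_subalgebra Q FX" by (rule sfs_prob[OF Q subQX])
  have sfQR: "sigma_finite_subalgebra Q FR" by (rule sfs_prob[OF Q subQR])
  have sfQY: "sigma_finite_subalgebra Q FY" by (rule sfs_prob[OF Q subQY])
  interpret PX: sigma_finite_subalgebra P FX by (rule sfPX)
  interpret PR: sigma_finite_subalgebra P FR by (rule sfPR)
  interpret PY: sigma_finite_subalgebra P FY by (rule sfPY)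
  interpret QX: sigma_finite_subalgebra Q FX by (rule sfQX)
  interpret QR: sigma_finite_subalgebra Q FR by (rule sfQR)
  interpret QY: sigma_finite_subalgebra Q FY by (rule sfQY)
  have fmP: "finite_measure P" by (rule P.finite_measure_axioms)
  have fmQ: "finite_measure Q" by (rule Q.finite_measure_axioms)
  have fstFX[measurable]: "fst \<in> measurable FX MX" unfolding FX_def
    by (rule measurable_vimage_algebra1) (use measurable_space[OF fstP] in auto)
  have RFR[measurable]: "R \<in> measurable FR MR" unfolding FR_def
    by (rule measurable_vimage_algebra1) (use measurable_space[OF RP] in auto)
  have sndFY[measurable]: "snd \<in> measurable FY MY" unfolding FY_def
    by (rule measurable_vimage_algebra1) (use measurable_space[OF sndP] in auto)
  have FR_FX: "\<And>h N. h \<in> measurable FR N \<Longrightarrow> h \<in> measurable FX N"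
    by (rule measurable_from_subalg[OF subXR])
  define \<kappa> where "\<kappa> = (\<lambda>\<omega>. K (R \<omega>))"
  have kFR[measurable]: "\<kappa> \<in> measurable FR (prob_algebra MY)"
    unfolding \<kappa>_def using K_kernel RFR by (rule measurable_compose[rotated])
  have kFX[measurable]: "\<kappa> \<in> measurable FX (prob_algebra MY)" by (rule FR_FX[OF kFR])
  have kP[measurable]: "\<kappa> \<in> measurable P (prob_algebra MY)" by (rule measurable_from_subalg[OF subPX kFX])
  have kFRs[measurable]: "\<kappa> \<in> measurable FR (subprob_algebra MY)" by (rule measurable_prob_algebraD[OF kFR])
  have kFXs[measurable]: "\<kappa> \<in> measurable FX (subprob_algebra MY)" by (rule measurable_prob_algebraD[OF kFX])
  have kPs[measurable]: "\<kappa> \<in> measurable P (subprob_algebra MY)" by (rule measurable_prob_algebraD[OF kP])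
  have kprob: "\<And>\<omega>. \<omega> \<in> space P \<Longrightarrow> prob_space (\<kappa> \<omega>) \<and> sets (\<kappa> \<omega>) = sets MY"
    using measurable_space[OF kP] by (auto simp: space_prob_algebra)
  define \<rho> where "\<rho> = RN_deriv P Q"
  have \<rho>m[measurable]: "\<rho> \<in> borel_measurable P" unfolding \<rho>_def by simp
  have Qd: "density P \<rho> = Q" unfolding \<rho>_def
    by (rule P.density_RN_deriv[OF ac]) (simp add: sP sQ)
  have \<rho>fin: "AE \<omega> in P. \<rho> \<omega> \<noteq> \<infinity>" unfolding \<rho>_def
    by (rule P.RN_deriv_finite[OF _ ac]) (auto simp: sP sQ prob_space_imp_sigma_finite Q)
  have f\<rho>: "AE \<omega> in P. ennreal (f \<omega>) = \<rho> \<omega>"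
    using \<rho>fin by eventually_elim (simp add: f_def \<rho>_def[symmetric] ennreal_enn2real_if)
  have fm[measurable]: "f \<in> borel_measurable P" unfolding f_def by simp
  have fpos: "\<And>\<omega>. f \<omega> \<ge> 0" unfolding f_def by simp
  define PY where "PY = distr P MY snd"
  define QY where "QY = distr Q MY snd"
  have sPY[measurable_cong]: "sets PY = sets MY" unfolding PY_def by simp
  have sQY: "sets QY = sets MY" unfolding QY_def by simp
  have PYp: "prob_space PY" unfolding PY_def by (rule P.prob_space_distr) simp
  have QYp: "prob_space QY" unfolding QY_def by (rule Q.prob_space_distr) simp
  have acY: "absolutely_continuous PY QY"
    unfolding absolutely_continuous_def
  proof
    fix N assume N: "N \<in> null_sets PY"
    then have Ns[measurable]: "N \<in> sets MY" using sPY by auto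
    have "emeasure P (snd -` N \<inter> space P) = 0"
      using N emeasure_distr[OF sndP Ns] unfolding PY_def by auto
    then have "snd -` N \<inter> space P \<in> null_sets P" by (auto intro: null_setsI)
    then have "snd -` N \<inter> space P \<in> null_sets Q" using ac unfolding absolutely_continuous_def by auto
    then have "emeasure QY N = 0" unfolding QY_def using spQ emeasure_distr[OF sndQ Ns] by auto
    then show "N \<in> null_sets QY" using sQY by (auto intro: null_setsI)
  qed
  define \<gamma> where "\<gamma> = RN_deriv PY QY"
  have \<gamma>m[measurable]: "\<gamma> \<in> borel_measurable MY"
    using borel_measurable_RN_deriv[of PY QY] measurable_cong_sets[OF sPY refl] unfolding \<gamma>_def by simp
  have QYd: "density PY \<gamma> = QY" unfolding \<gamma>_def
    by (rule sigma_finite_measure.density_RN_deriv[OF prob_space_imp_sigma_finite[OF PYp] acY]) (simp add: sPY sQY)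
  have \<gamma>fin: "AE y in PY. \<gamma> y \<noteq> \<infinity>" unfolding \<gamma>_def
    by (rule sigma_finite_measure.RN_deriv_finite[OF prob_space_imp_sigma_finite[OF PYp] _ acY]) (auto simp: sPY sQY prob_space_imp_sigma_finite QYp)
  have g\<gamma>: "AE \<omega> in P. ennreal (g (snd \<omega>)) = \<gamma> (snd \<omega>)"
  proof -
    have "AE \<omega> in P. \<gamma> (snd \<omega>) \<noteq> \<infinity>"
      using \<gamma>fin unfolding PY_def by (subst (asm) AE_distr_iff) auto
    then show ?thesis
      by eventually_elim (simp add: g_def \<gamma>_def[symmetric] PY_def[symmetric] QY_def[symmetric] ennreal_enn2real_if)
  qed
  have gm[measurable]: "g \<in> borel_measurable MY"
    unfolding g_def \<gamma>_def[symmetric] PY_def[symmetric] QY_def[symmetric] by simp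
  have gpos: "\<And>y. g y \<ge> 0" unfolding g_def by simp
  have I\<gamma>: "(\<integral>\<^sup>+y. \<gamma> y \<partial>PY) = 1"
  proof -
    have "emeasure (density PY \<gamma>) (space PY) = (\<integral>\<^sup>+y. \<gamma> y * indicator (space PY) y \<partial>PY)"
      by (rule emeasure_density) auto
    also have "\<dots> = (\<integral>\<^sup>+y. \<gamma> y \<partial>PY)" by (rule nn_integral_cong) simp
    finally have "(\<integral>\<^sup>+y. \<gamma> y \<partial>PY) = emeasure QY (space PY)" using QYd by simp
    also have "space PY = space QY" using sPY sQY by (metis sets_eq_imp_space_eq)
    also have "emeasure QY (space QY) = 1" using prob_space.emeasure_space_1[OF QYp] .
    finally show ?thesis .
  qed
  have I\<gamma>P: "(\<integral>\<^sup>+\<omega>. \<gamma> (snd \<omega>) \<partial>P) = 1"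
    using I\<gamma> unfolding PY_def by (simp add: nn_integral_distr)
  have Ig: "(\<integral>\<^sup>+\<omega>. ennreal (g (snd \<omega>)) \<partial>P) < \<infinity>"
    using I\<gamma>P nn_integral_cong_AE[OF g\<gamma>] by simp
  have I\<rho>: "(\<integral>\<^sup>+\<omega>. \<rho> \<omega> \<partial>P) = 1"
  proof -
    have "emeasure (density P \<rho>) (space P) = (\<integral>\<^sup>+y. \<rho> y * indicator (space P) y \<partial>P)"
      by (rule emeasure_density) auto
    also have "\<dots> = (\<integral>\<^sup>+y. \<rho> y \<partial>P)" by (rule nn_integral_cong) simp
    finally have "(\<integral>\<^sup>+y. \<rho> y \<partial>P) = emeasure Q (space Q)" using Qd spQ by simp
    also have "\<dots> = 1" using Q.emeasure_space_1 .
    finally show ?thesis .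
  qed
  have If: "(\<integral>\<^sup>+\<omega>. ennreal (f \<omega>) \<partial>P) < \<infinity>"
    using I\<rho> nn_integral_cong_AE[OF f\<rho>] by simp
  define a where "a = real_cond_exp P FX f"
  define b where "b = real_cond_exp P FX (\<lambda>\<omega>. g (snd \<omega>))"
  have am[measurable]: "a \<in> borel_measurable FX" unfolding a_def by simp
  have bm[measurable]: "b \<in> borel_measurable FX" unfolding b_def by simp
  have amP[measurable]: "a \<in> borel_measurable P" by (rule measurable_from_subalg[OF subPX am])
  have bmP[measurable]: "b \<in> borel_measurable P" by (rule measurable_from_subalg[OF subPX bm])
  have ennA: "AE \<omega> in P. ennreal (a \<omega>) = nn_cond_exp P FX \<rho> \<omega>"
  proof -
    have "AE \<omega> in P. ennreal (a \<omega>) = nn_cond_exp P FX (\<lambda>\<omega>. ennreal (f \<omega>)) \<omega>"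
      unfolding a_def by (rule PX.real_nn_cond_exp[OF fm fpos If])
    moreover have "AE \<omega> in P. nn_cond_exp P FX (\<lambda>\<omega>. ennreal (f \<omega>)) \<omega> = nn_cond_exp P FX \<rho> \<omega>"
      by (rule PX.nn_cond_exp_cong[OF f\<rho>]) auto
    ultimately show ?thesis by eventually_elim simp
  qed
  have ennB: "AE \<omega> in P. ennreal (b \<omega>) = nn_cond_exp P FX (\<lambda>\<omega>. \<gamma> (snd \<omega>)) \<omega>"
  proof -
    have "AE \<omega> in P. ennreal (b \<omega>) = nn_cond_exp P FX (\<lambda>\<omega>. ennreal (g (snd \<omega>))) \<omega>"
      unfolding b_def by (rule PX.real_nn_cond_exp[OF _ _ Ig]) (auto simp: gpos)
    moreover have "AE \<omega> in P. nn_cond_exp P FX (\<lambda>\<omega>. ennreal (g (snd \<omega>))) \<omega> = nn_cond_exp P FX (\<lambda>\<omega>. \<gamma> (snd \<omega>)) \<omega>"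
      by (rule PX.nn_cond_exp_cong[OF g\<gamma>]) auto
    ultimately show ?thesis by eventually_elim simp
  qed
  have bpos: "AE \<omega> in P. b \<omega> \<ge> 0"
    unfolding b_def by (rule PX.real_cond_exp_pos) (auto simp: gpos)
  have indP: "AE \<omega> in P. nn_cond_exp P FX (indicator (snd -` G \<inter> space P)) \<omega> = emeasure (\<kappa> \<omega>) G"
    if G[measurable]: "G \<in> sets MY" for G
  proof -
    have S: "snd -` G \<inter> space P \<in> sets P" by measurable
    note e1 = real_nn_cond_exp_ind[OF sfPX fmP S]
    note e2 = condP[OF G, folded FX_def FR_def]
    note e3 = K_rcd[OF G, folded FR_def \<kappa>_def]
    show ?thesis using e1 e2 e3 AE_space[of P]
    proof eventually_elim
      case (elim \<omega>)
      then have "prob_space (\<kappa> \<omega>)" "sets (\<kappa> \<omega>) = sets MY" using kprob by auto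
      then have "emeasure (\<kappa> \<omega>) G = ennreal (measure (\<kappa> \<omega>) G)"
        using G by (simp add: finite_measure.emeasure_eq_measure prob_space.finite_measure)
      then show ?case using elim by (simp add: \<kappa>_def)
    qed
  qed
  have C1P: "(\<integral>\<^sup>+\<omega>. W \<omega> * \<phi> (snd \<omega>) \<partial>P) = (\<integral>\<^sup>+\<omega>. W \<omega> * (\<integral>\<^sup>+y. \<phi> y \<partial>\<kappa> \<omega>) \<partial>P)"
    if "W \<in> borel_measurable FX" "\<phi> \<in> borel_measurable MY" for W \<phi>
    by (rule cond_indep_nn[OF sfPX neP sndP kPs indP that])
  define \<psi> where "\<psi> = (\<lambda>G \<omega>. \<integral>\<^sup>+y. indicator G y * \<gamma> y \<partial>\<kappa> \<omega>)"
  have \<psi>m[measurable]: "\<psi> G \<in> borel_measurable FR" if [measurable]: "G \<in> sets MY" for G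
    unfolding \<psi>_def by (rule nn_integral_measurable_subprob_algebra2[OF _ kFRs]) measurable
  have \<psi>mX[measurable]: "\<psi> G \<in> borel_measurable FX" if "G \<in> sets MY" for G
    by (rule FR_FX[OF \<psi>m[OF that]])
  have \<psi>mP[measurable]: "\<psi> G \<in> borel_measurable P" if "G \<in> sets MY" for G
    by (rule measurable_from_subalg[OF subPX \<psi>mX[OF that]])
  have sndsp: "\<And>\<omega>. \<omega> \<in> space P \<Longrightarrow> snd \<omega> \<in> space MY" by (rule measurable_space[OF sndP])
  have b\<psi>: "AE \<omega> in P. ennreal (b \<omega>) = \<psi> (space MY) \<omega>"
  proof -
    have "AE \<omega> in P. \<psi> (space MY) \<omega> = nn_cond_exp P FX (\<lambda>\<omega>. \<gamma> (snd \<omega>)) \<omega>"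
    proof (rule PX.nn_cond_exp_charact)
      fix A assume A[measurable]: "A \<in> sets FX"
      have "(\<integral>\<^sup>+x\<in>A. \<gamma> (snd x) \<partial>P) = (\<integral>\<^sup>+x. indicator A x * (indicator (space MY) (snd x) * \<gamma> (snd x)) \<partial>P)"
        by (rule nn_integral_cong) (simp add: sndsp mult.commute)
      also have "\<dots> = (\<integral>\<^sup>+x. indicator A x * \<psi> (space MY) x \<partial>P)"
        unfolding \<psi>_def by (rule C1P) measurable
      also have "\<dots> = (\<integral>\<^sup>+x\<in>A. \<psi> (space MY) x \<partial>P)" by (simp add: mult.commute)
      finally show "(\<integral>\<^sup>+x\<in>A. \<gamma> (snd x) \<partial>P) = (\<integral>\<^sup>+x\<in>A. \<psi> (space MY) x \<partial>P)" .
    qed auto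
    with ennB show ?thesis by eventually_elim simp
  qed
  have LS: "(\<integral>\<^sup>+\<omega>. indicator E \<omega> * indicator G (snd \<omega>) \<partial>Q)
      = (\<integral>\<^sup>+\<omega>. indicator E \<omega> * (indicator G (snd \<omega>) * \<gamma> (snd \<omega>)) \<partial>P)"
    if E: "E \<in> sets FR" and G[measurable]: "G \<in> sets MY" for E G
  proof -
    have Rsp: "R \<in> space P \<rightarrow> space MR" using measurable_space[OF RP] by auto
    obtain M where M: "M \<in> sets MR" "E = R -` M \<inter> space P"
      using E unfolding FR_def sets_vimage_algebra2[OF Rsp] by blast
    obtain h where hm[measurable]: "h \<in> borel_measurable MY"
      and hP: "AE \<omega> in P. real_cond_exp P FY (indicator E) \<omega> = h (snd \<omega>)"
      and hQ: "AE \<omega> in Q. real_cond_exp Q FY (indicator E) \<omega> = h (snd \<omega>)"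
      using label_shift[OF M(1)] unfolding M(2) FY_def spQ by blast
    have EP[measurable]: "E \<in> sets P" using E subPR unfolding subalgebra_def by auto
    have EQ[measurable]: "E \<in> sets Q" using EP sP sQ by simp
    note LQ = real_nn_cond_exp_ind[OF sfQY fmQ EQ]
    note LP = real_nn_cond_exp_ind[OF sfPY fmP EP]
    have "(\<integral>\<^sup>+\<omega>. indicator E \<omega> * indicator G (snd \<omega>) \<partial>Q)
        = (\<integral>\<^sup>+\<omega>. indicator G (snd \<omega>) * indicator E \<omega> \<partial>Q)" by (simp add: mult.commute)
    also have "\<dots> = (\<integral>\<^sup>+\<omega>. indicator G (snd \<omega>) * nn_cond_exp Q FY (indicator E) \<omega> \<partial>Q)"
      by (rule QY.nn_cond_exp_intg[symmetric]) measurable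
    also have "\<dots> = (\<integral>\<^sup>+\<omega>. indicator G (snd \<omega>) * ennreal (h (snd \<omega>)) \<partial>Q)"
    proof (rule nn_integral_cong_AE)
      show "AE \<omega> in Q. indicator G (snd \<omega>) * nn_cond_exp Q FY (indicator E) \<omega> = indicator G (snd \<omega>) * ennreal (h (snd \<omega>))"
        using LQ hQ by eventually_elim simp
    qed
    also have "\<dots> = (\<integral>\<^sup>+y. indicator G y * ennreal (h y) \<partial>QY)"
      unfolding QY_def by (rule nn_integral_distr[symmetric]) measurable
    also have "\<dots> = (\<integral>\<^sup>+y. \<gamma> y * (indicator G y * ennreal (h y)) \<partial>PY)"
      unfolding QYd[symmetric] by (rule nn_integral_density) measurable
    also have "\<dots> = (\<integral>\<^sup>+\<omega>. \<gamma> (snd \<omega>) * (indicator G (snd \<omega>) * ennreal (h (snd \<omega>))) \<partial>P)"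
      unfolding PY_def by (rule nn_integral_distr) measurable
    also have "\<dots> = (\<integral>\<^sup>+\<omega>. (\<gamma> (snd \<omega>) * indicator G (snd \<omega>)) * nn_cond_exp P FY (indicator E) \<omega> \<partial>P)"
    proof (rule nn_integral_cong_AE)
      show "AE \<omega> in P. \<gamma> (snd \<omega>) * (indicator G (snd \<omega>) * ennreal (h (snd \<omega>))) = (\<gamma> (snd \<omega>) * indicator G (snd \<omega>)) * nn_cond_exp P FY (indicator E) \<omega>"
        using LP hP by eventually_elim (simp add: mult.assoc)
    qed
    also have "\<dots> = (\<integral>\<^sup>+\<omega>. (\<gamma> (snd \<omega>) * indicator G (snd \<omega>)) * indicator E \<omega> \<partial>P)"
      by (rule PY.nn_cond_exp_intg) measurable
    also have "\<dots> = (\<integral>\<^sup>+\<omega>. indicator E \<omega> * (indicator G (snd \<omega>) * \<gamma> (snd \<omega>)) \<partial>P)"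
      by (simp add: ac_simps)
    finally show ?thesis .
  qed
  have LS': "(\<integral>\<^sup>+\<omega>. V \<omega> \<partial>Q) = (\<integral>\<^sup>+\<omega>. V \<omega> * \<gamma> (snd \<omega>) \<partial>P)"
    if V[measurable]: "V \<in> borel_measurable FR" for V
  proof -
    define Qg where "Qg = density P (\<lambda>\<omega>. \<gamma> (snd \<omega>))"
    have subQg: "subalgebra Qg FR" using subPR unfolding subalgebra_def Qg_def by simp
    have eqr: "restr_to_subalg Q FR = restr_to_subalg Qg FR"
    proof (rule measure_eqI)
      show "sets (restr_to_subalg Q FR) = sets (restr_to_subalg Qg FR)"
        using sets_restr_to_subalg[OF subQR] sets_restr_to_subalg[OF subQg] by simp
    next
      fix E assume "E \<in> sets (restr_to_subalg Q FR)"
      then have E[measurable]: "E \<in> sets FR" using sets_restr_to_subalg[OF subQR] by simp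
      have EP[measurable]: "E \<in> sets P" using E subPR unfolding subalgebra_def by auto
      have EQ[measurable]: "E \<in> sets Q" using EP sP sQ by simp
      have "emeasure (restr_to_subalg Q FR) E = emeasure Q E"
        by (rule emeasure_restr_to_subalg[OF subQR E])
      also have "\<dots> = (\<integral>\<^sup>+\<omega>. indicator E \<omega> \<partial>Q)" using EQ by simp
      also have "\<dots> = (\<integral>\<^sup>+\<omega>. indicator E \<omega> * indicator (space MY) (snd \<omega>) \<partial>Q)"
        by (rule nn_integral_cong) (simp add: spQ sndsp)
      also have "\<dots> = (\<integral>\<^sup>+\<omega>. indicator E \<omega> * (indicator (space MY) (snd \<omega>) * \<gamma> (snd \<omega>)) \<partial>P)"
        by (rule LS[OF E]) simp
      also have "\<dots> = (\<integral>\<^sup>+\<omega>. \<gamma> (snd \<omega>) * indicator E \<omega> \<partial>P)"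
        by (rule nn_integral_cong) (simp add: sndsp mult.commute)
      also have "\<dots> = emeasure Qg E"
        unfolding Qg_def by (rule emeasure_density[symmetric]) auto
      also have "\<dots> = emeasure (restr_to_subalg Qg FR) E"
        by (rule emeasure_restr_to_subalg[OF subQg E, symmetric])
      finally show "emeasure (restr_to_subalg Q FR) E = emeasure (restr_to_subalg Qg FR) E" .
    qed
    have "(\<integral>\<^sup>+\<omega>. V \<omega> \<partial>Q) = (\<integral>\<^sup>+\<omega>. V \<omega> \<partial>restr_to_subalg Q FR)"
      by (rule nn_integral_subalgebra2[OF subQR V, symmetric])
    also have "\<dots> = (\<integral>\<^sup>+\<omega>. V \<omega> \<partial>restr_to_subalg Qg FR)" unfolding eqr ..
    also have "\<dots> = (\<integral>\<^sup>+\<omega>. V \<omega> \<partial>Qg)" by (rule nn_integral_subalgebra2[OF subQg V])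
    also have "\<dots> = (\<integral>\<^sup>+\<omega>. \<gamma> (snd \<omega>) * V \<omega> \<partial>P)"
      unfolding Qg_def by (rule nn_integral_density) (auto intro: measurable_from_subalg[OF subPR V])
    finally show ?thesis by (simp add: mult.commute)
  qed
  define q where "q = (\<lambda>G. nn_cond_exp Q FR (indicator (snd -` G \<inter> space P)))"
  have qm[measurable]: "q G \<in> borel_measurable FR" for G unfolding q_def by simp
  have qmX[measurable]: "q G \<in> borel_measurable FX" for G by (rule FR_FX[OF qm])
  have qmP[measurable]: "q G \<in> borel_measurable P" for G by (rule measurable_from_subalg[OF subPR qm])
  have qmQ[measurable]: "q G \<in> borel_measurable Q" for G by (rule measurable_from_subalg[OF subQR qm])
  have C2: "AE \<omega> in P. q G \<omega> * \<psi> (space MY) \<omega> = \<psi> G \<omega>" if G[measurable]: "G \<in> sets MY" for G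
  proof -
    have e1: "AE \<omega> in P. \<psi> G \<omega> = nn_cond_exp P FR (\<lambda>\<omega>. indicator G (snd \<omega>) * \<gamma> (snd \<omega>)) \<omega>"
    proof (rule PR.nn_cond_exp_charact)
      fix A assume A[measurable]: "A \<in> sets FR"
      have AX[measurable]: "A \<in> sets FX" using A R_X unfolding FX_def FR_def by auto
      have "(\<integral>\<^sup>+x\<in>A. indicator G (snd x) * \<gamma> (snd x) \<partial>P) = (\<integral>\<^sup>+x. indicator A x * (indicator G (snd x) * \<gamma> (snd x)) \<partial>P)"
        by (simp add: mult.commute)
      also have "\<dots> = (\<integral>\<^sup>+x. indicator A x * \<psi> G x \<partial>P)"
        unfolding \<psi>_def by (rule C1P) measurable
      also have "\<dots> = (\<integral>\<^sup>+x\<in>A. \<psi> G x \<partial>P)" by (simp add: mult.commute)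
      finally show "(\<integral>\<^sup>+x\<in>A. indicator G (snd x) * \<gamma> (snd x) \<partial>P) = (\<integral>\<^sup>+x\<in>A. \<psi> G x \<partial>P)" .
    qed auto
    have e2: "AE \<omega> in P. q G \<omega> * \<psi> (space MY) \<omega> = nn_cond_exp P FR (\<lambda>\<omega>. indicator G (snd \<omega>) * \<gamma> (snd \<omega>)) \<omega>"
    proof (rule PR.nn_cond_exp_charact)
      fix A assume A[measurable]: "A \<in> sets FR"
      have AX[measurable]: "A \<in> sets FX" using A R_X unfolding FX_def FR_def by auto
      have "(\<integral>\<^sup>+x\<in>A. indicator G (snd x) * \<gamma> (snd x) \<partial>P) = (\<integral>\<^sup>+x. indicator A x * (indicator G (snd x) * \<gamma> (snd x)) \<partial>P)"
        by (simp add: mult.commute)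
      also have "\<dots> = (\<integral>\<^sup>+x. indicator A x * indicator G (snd x) \<partial>Q)"
        by (rule LS[OF A G, symmetric])
      also have "\<dots> = (\<integral>\<^sup>+x. indicator A x * indicator (snd -` G \<inter> space P) x \<partial>Q)"
        by (rule nn_integral_cong) (simp add: spQ split: split_indicator)
      also have "\<dots> = (\<integral>\<^sup>+x. indicator A x * q G x \<partial>Q)"
        unfolding q_def by (rule QR.nn_cond_exp_intg[symmetric]) (auto simp: spQ[symmetric])
      also have "\<dots> = (\<integral>\<^sup>+x. (indicator A x * q G x) * \<gamma> (snd x) \<partial>P)"
        by (rule LS') measurable
      also have "\<dots> = (\<integral>\<^sup>+x. (indicator A x * q G x) * (indicator (space MY) (snd x) * \<gamma> (snd x)) \<partial>P)"
        by (rule nn_integral_cong) (simp add: sndsp)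
      also have "\<dots> = (\<integral>\<^sup>+x. (indicator A x * q G x) * \<psi> (space MY) x \<partial>P)"
        unfolding \<psi>_def by (rule C1P) measurable
      also have "\<dots> = (\<integral>\<^sup>+x\<in>A. q G x * \<psi> (space MY) x \<partial>P)" by (simp add: ac_simps)
      finally show "(\<integral>\<^sup>+x\<in>A. indicator G (snd x) * \<gamma> (snd x) \<partial>P) = (\<integral>\<^sup>+x\<in>A. q G x * \<psi> (space MY) x \<partial>P)" .
    qed auto
    from e1 e2 show ?thesis by eventually_elim simp
  qed
  have Zf: "AE \<omega> in P. \<psi> (space MY) \<omega> = 0 \<longrightarrow> ennreal (a \<omega>) = 0"
  proof -
    define Z where "Z = \<psi> (space MY) -` {0} \<inter> space FR"
    have Z[measurable]: "Z \<in> sets FR" unfolding Z_def by (rule measurable_sets[OF \<psi>m]) auto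
    have ZX[measurable]: "Z \<in> sets FX" using Z R_X unfolding FX_def FR_def by auto
    have ZP[measurable]: "Z \<in> sets P" using ZX subPX unfolding subalgebra_def by auto
    have "(\<integral>\<^sup>+\<omega>. indicator Z \<omega> * ennreal (a \<omega>) \<partial>P) = (\<integral>\<^sup>+\<omega>. indicator Z \<omega> * nn_cond_exp P FX \<rho> \<omega> \<partial>P)"
    proof (rule nn_integral_cong_AE)
      show "AE \<omega> in P. indicator Z \<omega> * ennreal (a \<omega>) = indicator Z \<omega> * nn_cond_exp P FX \<rho> \<omega>"
        using ennA by eventually_elim simp
    qed
    also have "\<dots> = (\<integral>\<^sup>+\<omega>. indicator Z \<omega> * \<rho> \<omega> \<partial>P)"
      by (rule PX.nn_cond_exp_intg) measurable
    also have "\<dots> = (\<integral>\<^sup>+\<omega>. \<rho> \<omega> * indicator Z \<omega> \<partial>P)" by (simp add: mult.commute)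
    also have "\<dots> = (\<integral>\<^sup>+\<omega>. indicator Z \<omega> \<partial>Q)"
      unfolding Qd[symmetric] by (rule nn_integral_density[symmetric]) measurable
    also have "\<dots> = (\<integral>\<^sup>+\<omega>. indicator Z \<omega> * \<gamma> (snd \<omega>) \<partial>P)"
      by (rule LS') measurable
    also have "\<dots> = (\<integral>\<^sup>+\<omega>. indicator Z \<omega> * (indicator (space MY) (snd \<omega>) * \<gamma> (snd \<omega>)) \<partial>P)"
      by (rule nn_integral_cong) (simp add: sndsp)
    also have "\<dots> = (\<integral>\<^sup>+\<omega>. indicator Z \<omega> * \<psi> (space MY) \<omega> \<partial>P)"
      unfolding \<psi>_def by (rule C1P) measurable
    also have "\<dots> = (\<integral>\<^sup>+\<omega>. 0 \<partial>P)"
      by (rule nn_integral_cong) (simp add: Z_def split: split_indicator)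
    finally have "(\<integral>\<^sup>+\<omega>. indicator Z \<omega> * ennreal (a \<omega>) \<partial>P) = 0" by simp
    then have "AE \<omega> in P. indicator Z \<omega> * ennreal (a \<omega>) = 0"
      by (subst (asm) nn_integral_0_iff_AE) measurable
    then show ?thesis using AE_space[of P]
      by eventually_elim (auto simp: Z_def FR_def split: split_indicator)
  qed
  have qQ: "AE \<omega> in Q. nn_cond_exp Q FX (indicator (snd -` G \<inter> space P)) \<omega> = q G \<omega>"
    if G[measurable]: "G \<in> sets MY" for G
  proof -
    have SQ: "snd -` G \<inter> space P \<in> sets Q" using spQ by (metis sets.Int_space_eq2 measurable_sets[OF sndQ G])
    note e1 = real_nn_cond_exp_ind[OF sfQX fmQ SQ]
    note e2 = real_nn_cond_exp_ind[OF sfQR fmQ SQ]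
    note e3 = condQ[OF G, unfolded spQ, folded FX_def FR_def]
    from e1 e2 e3 show ?thesis unfolding q_def by eventually_elim simp
  qed
  define D where "D = (\<lambda>\<omega>. ennreal (a \<omega> / b \<omega> * g (snd \<omega>)))"
  have Dm[measurable]: "D \<in> borel_measurable P" unfolding D_def by measurable
  have rect: "emeasure (density P D) (A \<times> G) = emeasure Q (A \<times> G)"
    if A[measurable]: "A \<in> sets MX" and G[measurable]: "G \<in> sets MY" for A G
  proof -
    have AGP[measurable]: "A \<times> G \<in> sets P" using sP A G by (simp add: pair_measureI)
    have AGQ[measurable]: "A \<times> G \<in> sets Q" using sQ A G by (simp add: pair_measureI)
    have indAG: "indicator (A \<times> G) \<omega> = indicator A (fst \<omega>) * (indicator G (snd \<omega>) :: ennreal)" for \<omega>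
      by (cases \<omega>) (simp split: split_indicator)
    have "emeasure (density P D) (A \<times> G) = (\<integral>\<^sup>+\<omega>. D \<omega> * indicator (A \<times> G) \<omega> \<partial>P)"
      by (rule emeasure_density) auto
    also have "\<dots> = (\<integral>\<^sup>+\<omega>. (indicator A (fst \<omega>) * ennreal (a \<omega> / b \<omega>)) * (indicator G (snd \<omega>) * \<gamma> (snd \<omega>)) \<partial>P)"
    proof (rule nn_integral_cong_AE)
      show "AE \<omega> in P. D \<omega> * indicator (A \<times> G) \<omega> = (indicator A (fst \<omega>) * ennreal (a \<omega> / b \<omega>)) * (indicator G (snd \<omega>) * \<gamma> (snd \<omega>))"
        using g\<gamma>
      proof eventually_elim
        case (elim \<omega>)
        have "D \<omega> = ennreal (a \<omega> / b \<omega>) * ennreal (g (snd \<omega>))"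
          unfolding D_def by (rule ennreal_mult_nonneg_right[OF gpos])
        then have "D \<omega> = ennreal (a \<omega> / b \<omega>) * \<gamma> (snd \<omega>)" using elim by simp
        then show ?case unfolding indAG by (simp add: ac_simps)
      qed
    qed
    also have "\<dots> = (\<integral>\<^sup>+\<omega>. (indicator A (fst \<omega>) * ennreal (a \<omega> / b \<omega>)) * \<psi> G \<omega> \<partial>P)"
      unfolding \<psi>_def by (rule C1P) measurable
    also have "\<dots> = (\<integral>\<^sup>+\<omega>. (indicator A (fst \<omega>) * q G \<omega>) * nn_cond_exp P FX \<rho> \<omega> \<partial>P)"
    proof (rule nn_integral_cong_AE)
      show "AE \<omega> in P. (indicator A (fst \<omega>) * ennreal (a \<omega> / b \<omega>)) * \<psi> G \<omega> = (indicator A (fst \<omega>) * q G \<omega>) * nn_cond_exp P FX \<rho> \<omega>"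
        using C2[OF G] b\<psi> Zf ennA bpos
      proof eventually_elim
        case (elim \<omega>)
        have "ennreal (a \<omega> / b \<omega>) * \<psi> G \<omega> = ennreal (a \<omega> / b \<omega>) * (q G \<omega> * ennreal (b \<omega>))"
          using elim(1,2) by simp
        also have "\<dots> = q G \<omega> * ennreal (a \<omega>)"
          by (rule key_alg) (use elim in auto)
        finally have X: "ennreal (a \<omega> / b \<omega>) * \<psi> G \<omega> = q G \<omega> * nn_cond_exp P FX \<rho> \<omega>"
          using elim(4) by simp
        show ?case by (metis X mult.assoc)
      qed
    qed
    also have "\<dots> = (\<integral>\<^sup>+\<omega>. (indicator A (fst \<omega>) * q G \<omega>) * \<rho> \<omega> \<partial>P)"
      by (rule PX.nn_cond_exp_intg) measurable
    also have "\<dots> = (\<integral>\<^sup>+\<omega>. \<rho> \<omega> * (indicator A (fst \<omega>) * q G \<omega>) \<partial>P)" by (simp add: mult.commute)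
    also have "\<dots> = (\<integral>\<^sup>+\<omega>. indicator A (fst \<omega>) * q G \<omega> \<partial>Q)"
      unfolding Qd[symmetric] by (rule nn_integral_density[symmetric]) measurable
    also have "\<dots> = (\<integral>\<^sup>+\<omega>. indicator A (fst \<omega>) * nn_cond_exp Q FX (indicator (snd -` G \<inter> space P)) \<omega> \<partial>Q)"
    proof (rule nn_integral_cong_AE)
      show "AE \<omega> in Q. indicator A (fst \<omega>) * q G \<omega> = indicator A (fst \<omega>) * nn_cond_exp Q FX (indicator (snd -` G \<inter> space P)) \<omega>"
        using qQ[OF G] by eventually_elim simp
    qed
    also have "\<dots> = (\<integral>\<^sup>+\<omega>. indicator A (fst \<omega>) * indicator (snd -` G \<inter> space P) \<omega> \<partial>Q)"
      by (rule QX.nn_cond_exp_intg) (auto simp: spQ[symmetric])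
    also have "\<dots> = (\<integral>\<^sup>+\<omega>. indicator (A \<times> G) \<omega> \<partial>Q)"
      by (rule nn_integral_cong) (simp add: indAG spQ split: split_indicator)
    also have "\<dots> = emeasure Q (A \<times> G)" using AGQ by simp
    finally show ?thesis .
  qed
  have dens: "density P D = Q"
  proof (rule measure_eqI_generator_eq[OF Int_stable_pair_measure_generator[of MX MY] pair_measure_closed[of MX MY],
        where A="\<lambda>_. space MX \<times> space MY"])
    fix X assume "X \<in> {A \<times> G |A G. A \<in> sets MX \<and> G \<in> sets MY}"
    then obtain A G where "X = A \<times> G" "A \<in> sets MX" "G \<in> sets MY" by blast
    then show "emeasure (density P D) X = emeasure Q X" using rect by simp
  next
    show "sets (density P D) = sigma_sets (space MX \<times> space MY) {A \<times> G |A G. A \<in> sets MX \<and> G \<in> sets MY}"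
      using sP by (simp add: sets_pair_measure)
  next
    show "sets Q = sigma_sets (space MX \<times> space MY) {A \<times> G |A G. A \<in> sets MX \<and> G \<in> sets MY}"
      using sQ by (simp add: sets_pair_measure)
  next
    show "range (\<lambda>_::nat. space MX \<times> space MY) \<subseteq> {A \<times> G |A G. A \<in> sets MX \<and> G \<in> sets MY}"
      by auto
  next
    show "(\<Union>i::nat. space MX \<times> space MY) = space MX \<times> space MY" by simp
  next
    fix i :: nat
    show "emeasure (density P D) (space MX \<times> space MY) \<noteq> \<infinity>"
      using rect[of "space MX" "space MY"] Q.emeasure_finite by simp
  qed
  obtain y0 where y0: "y0 \<in> space MY" using neP spP by auto
  have pair_m[measurable]: "(\<lambda>x. (x, y0)) \<in> measurable MX (MX \<Otimes>\<^sub>M MY)"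
    using y0 by measurable
  have amPr: "a \<in> borel_measurable (MX \<Otimes>\<^sub>M MY)" using amP measurable_cong_sets[OF sP refl] by simp
  have bmPr: "b \<in> borel_measurable (MX \<Otimes>\<^sub>M MY)" using bmP measurable_cong_sets[OF sP refl] by simp
  define hb where "hb = (\<lambda>x. max 0 (a (x, y0) / b (x, y0)))"
  have hbm: "hb \<in> borel_measurable MX" unfolding hb_def
    using measurable_compose[OF pair_m amPr] measurable_compose[OF pair_m bmPr] by measurable
  have fstsp: "fst \<in> space P \<rightarrow> space MX" using measurable_space[OF fstP] by auto
  have aconst: "a \<omega> = a (fst \<omega>, y0)" and bconst: "b \<omega> = b (fst \<omega>, y0)" if \<omega>: "\<omega> \<in> space P" for \<omega>
  proof -
    have in2: "(fst \<omega>, y0) \<in> space P" using \<omega> y0 spP by auto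
    show "a \<omega> = a (fst \<omega>, y0)"
      by (rule vimage_fst_const[OF am[unfolded FX_def] fstsp \<omega> in2]) simp
    show "b \<omega> = b (fst \<omega>, y0)"
      by (rule vimage_fst_const[OF bm[unfolded FX_def] fstsp \<omega> in2]) simp
  qed
  have "density P (\<lambda>\<omega>. ennreal (hb (fst \<omega>) * g (snd \<omega>))) = density P D"
  proof (rule density_cong)
    show "(\<lambda>\<omega>. ennreal (hb (fst \<omega>) * g (snd \<omega>))) \<in> borel_measurable P"
      using hbm by measurable
    show "AE \<omega> in P. ennreal (hb (fst \<omega>) * g (snd \<omega>)) = D \<omega>"
      using AE_space[of P]
    proof eventually_elim
      case (elim \<omega>)
      show ?case unfolding hb_def D_def
        using ennreal_max0_mult[OF gpos, of "a \<omega> / b \<omega>" "snd \<omega>"] aconst[OF elim] bconst[OF elim]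
        by simp
    qed
  qed (rule Dm)
  then have fjs: "FJS MX MY P Q"
    unfolding FJS_def using hbm gm gpos dens by (intro exI[of _ hb] exI[of _ g]) (auto simp: hb_def)
  show ?thesis
    using fjs dens unfolding D_def a_def b_def FX_def by simp
qed

end
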